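(* Let $A\in\mathbb{R}_+^{n\times n}$ be a nonzero circulant matrix. Then $$x\in\mathrm{Attr}(A)\iff A^{n^2}_{i\bullet}\otimes x=A^{n^2}_{j\bullet}\otimes x\ \text{ for all } i,j\in\{1,\dots,n\}\text{ with }[i]\to_1[j],$$ and $$x\in\mathrm{Attr}(A)\iff A^{n^2}_{i\bullet}\otimes x=A^{n^2}_{j\bullet}\otimes x\ \text{ for all } i,j\in\{1,\dots,n\}\text{ with } i\sim_A j.$$
   Context: Max algebra on $\mathbb{R}_+$: $\oplus=\max$, ordinary product; $A^t$ max-algebraic power, $A^t_{i\bullet}$ its $i$-th row, $A^t_{i\bullet}\otimes x=\max_k (A^t)_{i,k}x_k$. $\lambda(A)$: greatest max-algebraic eigenvalue (maximum cycle geometric mean of the weighted digraph $\mathcal{G}(A)$ with edges $(i,j)$, $A_{i,j}\ne0$). $\mathrm{Attr}(A)=\{x\in\mathbb{R}_+^n: A^{t+1}\otimes x=\lambda(A)A^t\otimes x\text{ for some }t\ge0\}$. The critical digraph $\mathcal{C}(A)$ consists of all nodes and edges of cycles attaining mean $\lambda(A)$; for a nonzero circulant every node is critical and $\mathcal{C}(A)$ is a disjoint union of strongly connected components. $i\sim_A j$ means $i,j$ lie in the same component of $\mathcal{C}(A)$. For a component with cyclicity $\sigma$ (gcd of its cycle lengths), nodes $i,j$ of it are in the same cyclic class if walks in the component from $i$ to $j$ have length divisible by $\sigma$; $[i]$ is the cyclic class of $i$, and $[i]\to_1[j]$ means walks from a member of $[i]$ to a member of $[j]$ (in the same component) have length $\equiv1\pmod\sigma$.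 A circulant matrix has $A_{i,j}=a_t$, $t\equiv j-i\pmod n$. *)

theory Defs
  imports Complex_Main
begin

text \<open>An n x n matrix is a function
  nat \<Rightarrow> nat \<Rightarrow> real, only entries with indices in {0..<n} matter
  (nodes are indexed 0,...,n-1 instead of 1,...,n).\<close>

definition mmult :: "nat \<Rightarrow> (nat \<Rightarrow> nat \<Rightarrow> real) \<Rightarrow> (nat \<Rightarrow> nat \<Rightarrow> real) \<Rightarrow> nat \<Rightarrow> nat \<Rightarrow> real" where
  "mmult n A B i j = Max ((\<lambda>k. A i k * B k j) ` {..<n})"

fun mpow :: "nat \<Rightarrow> (nat \<Rightarrow> nat \<Rightarrow> real) \<Rightarrow> nat \<Rightarrow> nat \<Rightarrow> nat \<Rightarrow> real" where
  "mpow n A 0 = (\<lambda>i j. if i = j then 1 else 0)"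
| "mpow n A (Suc t) = mmult n (mpow n A t) A"

definition mrow_vec :: "nat \<Rightarrow> (nat \<Rightarrow> nat \<Rightarrow> real) \<Rightarrow> nat \<Rightarrow> (nat \<Rightarrow> real) \<Rightarrow> real" where
  "mrow_vec n M i x = Max ((\<lambda>k. M i k * x k) ` {..<n})"

definition circulant :: "nat \<Rightarrow> (nat \<Rightarrow> nat \<Rightarrow> real) \<Rightarrow> bool" where
  "circulant n A \<longleftrightarrow> (\<exists>a :: nat \<Rightarrow> real. \<forall>i<n. \<forall>j<n. A i j = a ((j + n - i) mod n))"

definition is_cycle :: "nat \<Rightarrow> (nat \<Rightarrow> nat \<Rightarrow> real) \<Rightarrow> nat list \<Rightarrow> bool" where
  "is_cycle n A vs \<longleftrightarrow> vs \<noteq> [] \<and> distinct vs \<and> set vs \<subseteq> {..<n} \<and>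
     (\<forall>l<length vs. A (vs ! l) (vs ! (Suc l mod length vs)) \<noteq> 0)"

definition cycle_weight :: "(nat \<Rightarrow> nat \<Rightarrow> real) \<Rightarrow> nat list \<Rightarrow> real" where
  "cycle_weight A vs = (\<Prod>l<length vs. A (vs ! l) (vs ! (Suc l mod length vs)))"

definition cycle_mean :: "(nat \<Rightarrow> nat \<Rightarrow> real) \<Rightarrow> nat list \<Rightarrow> real" where
  "cycle_mean A vs = root (length vs) (cycle_weight A vs)"

definition mlambda :: "nat \<Rightarrow> (nat \<Rightarrow> nat \<Rightarrow> real) \<Rightarrow> real" where
  "mlambda n A = (if \<exists>vs. is_cycle n A vs
      then Max (cycle_mean A ` {vs. is_cycle n A vs}) else 0)"

definition crit_cycle :: "nat \<Rightarrow> (nat \<Rightarrow> nat \<Rightarrow> real) \<Rightarrow> nat list \<Rightarrow> bool" where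
  "crit_cycle n A vs \<longleftrightarrow> is_cycle n A vs \<and> cycle_mean A vs = mlambda n A"

definition crit_edges :: "nat \<Rightarrow> (nat \<Rightarrow> nat \<Rightarrow> real) \<Rightarrow> (nat \<times> nat) set" where
  "crit_edges n A = {(vs ! l, vs ! (Suc l mod length vs)) | vs l. crit_cycle n A vs \<and> l < length vs}"

definition crit_node :: "nat \<Rightarrow> (nat \<Rightarrow> nat \<Rightarrow> real) \<Rightarrow> nat \<Rightarrow> bool" where
  "crit_node n A i \<longleftrightarrow> (\<exists>vs. crit_cycle n A vs \<and> i \<in> set vs)"

definition crit_sim :: "nat \<Rightarrow> (nat \<Rightarrow> nat \<Rightarrow> real) \<Rightarrow> nat \<Rightarrow> nat \<Rightarrow> bool" where
  "crit_sim n A i j \<longleftrightarrow> crit_node n A i \<and> crit_node n A j \<and>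
     (i, j) \<in> (crit_edges n A)\<^sup>* \<and> (j, i) \<in> (crit_edges n A)\<^sup>*"

definition cyclicity :: "nat \<Rightarrow> (nat \<Rightarrow> nat \<Rightarrow> real) \<Rightarrow> nat \<Rightarrow> nat" where
  "cyclicity n A i = Gcd {length vs | vs. is_cycle n A vs \<and>
      (\<forall>l<length vs. (vs ! l, vs ! (Suc l mod length vs)) \<in> crit_edges n A) \<and>
      crit_sim n A (hd vs) i}"

definition cyc_next :: "nat \<Rightarrow> (nat \<Rightarrow> nat \<Rightarrow> real) \<Rightarrow> nat \<Rightarrow> nat \<Rightarrow> bool" where
  "cyc_next n A i j \<longleftrightarrow> crit_sim n A i j \<and>
     (\<forall>l. (i, j) \<in> (crit_edges n A) ^^ l \<longrightarrow> l mod cyclicity n A i = 1 mod cyclicity n A i)"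

definition Attr :: "nat \<Rightarrow> (nat \<Rightarrow> nat \<Rightarrow> real) \<Rightarrow> (nat \<Rightarrow> real) set" where
  "Attr n A = {x. (\<forall>i<n. 0 \<le> x i) \<and>
     (\<exists>t. \<forall>i<n. mrow_vec n (mpow n A (Suc t)) i x = mlambda n A * mrow_vec n (mpow n A t) i x)}"

end

theory Submission
  imports Defs
begin

lemma Max_mult_const:
  fixes f :: "'a \<Rightarrow> real"
  assumes "finite K" "K \<noteq> {}" "0 \<le> c"
  shows "Max (f ` K) * c = Max ((\<lambda>k. f k * c) ` K)"
proof -
  have "mono (\<lambda>v::real. v * c)" using assms(3) by (simp add: mono_def mult_right_mono)
  from mono_Max_commute[OF this, of "f ` K"] assms show ?thesis by (simp add: image_image)
qed

lemma Max_const_mult: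
  fixes f :: "'a \<Rightarrow> real"
  assumes "finite K" "K \<noteq> {}" "0 \<le> c"
  shows "c * Max (f ` K) = Max ((\<lambda>k. c * f k) ` K)"
  using Max_mult_const[OF assms, of f] by (simp add: mult.commute)

lemma Max_swap:
  fixes g :: "'a \<Rightarrow> 'b \<Rightarrow> real"
  assumes "finite I" "I \<noteq> {}" "finite J" "J \<noteq> {}"
  shows "Max ((\<lambda>i. Max ((\<lambda>j. g i j) ` J)) ` I) = Max ((\<lambda>j. Max ((\<lambda>i. g i j) ` I)) ` J)"
proof (rule antisym)
  have "g i j \<le> Max ((\<lambda>j. Max ((\<lambda>i. g i j) ` I)) ` J)" if "i \<in> I" "j \<in> J" for i j
  proof -
    have "g i j \<le> Max ((\<lambda>i. g i j) ` I)" using that assms by (intro Max_ge) auto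
    also have "\<dots> \<le> Max ((\<lambda>j. Max ((\<lambda>i. g i j) ` I)) ` J)" using that assms by (intro Max_ge) auto
    finally show ?thesis .
  qed
  then show "Max ((\<lambda>i. Max ((\<lambda>j. g i j) ` J)) ` I) \<le> Max ((\<lambda>j. Max ((\<lambda>i. g i j) ` I)) ` J)"
    using assms by auto
  have "g i j \<le> Max ((\<lambda>i. Max ((\<lambda>j. g i j) ` J)) ` I)" if "i \<in> I" "j \<in> J" for i j
  proof -
    have "g i j \<le> Max ((\<lambda>j. g i j) ` J)" using that assms by (intro Max_ge) auto
    also have "\<dots> \<le> Max ((\<lambda>i. Max ((\<lambda>j. g i j) ` J)) ` I)" using that assms by (intro Max_ge) auto
    finally show ?thesis .
  qed
  then show "Max ((\<lambda>j. Max ((\<lambda>i. g i j) ` I)) ` J) \<le> Max ((\<lambda>i. Max ((\<lambda>j. g i j) ` J)) ` I)"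
    using assms by auto
qed

lemma circ_step: fixes u n s :: nat assumes "u < n" "s < n" shows "((u + s) mod n + n - u) mod n = s"
proof (cases "u + s < n")
  case True
  then have "(u + s) mod n + n - u = s + n" by (simp add: mod_less)
  then show ?thesis using assms by simp
next
  case False
  then have "(u + s) mod n = u + s - n" using assms by (simp add: mod_if)
  then have "(u + s) mod n + n - u = s" using False by simp
  then show ?thesis using assms by simp
qed

lemma circ_step2: fixes u n k :: nat assumes "u < n" "k < n" shows "(u + (k + n - u) mod n) mod n = k"
proof (cases "k + n - u < n")
  case True
  then have "u + (k + n - u) mod n = k + n" using assms by (simp add: mod_less)
  then show ?thesis using assms by simp
next
  case False
  then have "(k + n - u) mod n = k - u" using assms by (simp add: mod_if)
  then show ?thesis using assms False by simp
qed

locale cm =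
  fixes n :: nat and A :: "nat \<Rightarrow> nat \<Rightarrow> real"
  assumes npos: "0 < n"
    and circ: "\<forall>i<n. \<forall>j<n. A i j = A 0 ((j + n - i) mod n)"
    and nonneg: "\<forall>i<n. \<forall>j<n. 0 \<le> A i j"
    and nz: "\<exists>i<n. \<exists>j<n. A i j \<noteq> 0"
begin

abbreviation c where "c d \<equiv> A 0 d"
definition M where "M = Max (c ` {..<n})"
definition y where "y t x i = mrow_vec n (mpow n A t) i x"
definition wt where "wt ds = prod_list (map c ds)"
definition tg where "tg i ds = (i + sum_list ds) mod n"

lemma circI: "i < n \<Longrightarrow> j < n \<Longrightarrow> A i j = c ((j + n - i) mod n)"
  using circ by blast

lemma c_nonneg: "d < n \<Longrightarrow> 0 \<le> c d" using nonneg npos by auto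

lemma c_le_M: "d < n \<Longrightarrow> c d \<le> M" unfolding M_def by (rule Max_ge) auto

lemma M_pos: "0 < M"
proof -
  obtain i j where ij: "i<n" "j<n" "A i j \<noteq> 0" using nz by auto
  have "A i j = c ((j + n - i) mod n)" using circI ij by blast
  moreover have "(j + n - i) mod n < n" using npos by simp
  ultimately show ?thesis using ij c_le_M[of "(j + n - i) mod n"] c_nonneg[of "(j + n - i) mod n"] by force
qed

lemma M_attained: "\<exists>s<n. c s = M"
proof -
  have "M \<in> c ` {..<n}" unfolding M_def by (rule Max_in) (use npos in auto)
  thus ?thesis by auto
qed

lemma A_step: "u < n \<Longrightarrow> d < n \<Longrightarrow> A u ((u + d) mod n) = c d"
  using circI[of u "(u + d) mod n"] circ_step[of u n d] npos by auto

lemma mpow_nonneg: "i < n \<Longrightarrow> j < n \<Longrightarrow> 0 \<le> mpow n A t i j"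
proof (induction t arbitrary: i j)
  case 0 then show ?case by simp
next
  case (Suc t)
  have "0 \<le> mpow n A t i 0 * A 0 j" using Suc npos nonneg by simp
  also have "\<dots> \<le> mmult n (mpow n A t) A i j" unfolding mmult_def by (rule Max_ge) (use npos in auto)
  finally show ?case by simp
qed

lemma y_Suc: assumes "i < n" and xn: "\<forall>m<n. 0 \<le> x m"
  shows "y (Suc t) x i = y t (\<lambda>m. mrow_vec n A m x) i"
proof -
  have ne: "{..<n} \<noteq> {}" using npos by auto
  have "y (Suc t) x i = Max ((\<lambda>k. Max ((\<lambda>m. mpow n A t i m * A m k) ` {..<n}) * x k) ` {..<n})"
    by (simp add: y_def mrow_vec_def mmult_def)
  also have "\<dots> = Max ((\<lambda>k. Max ((\<lambda>m. mpow n A t i m * A m k * x k) ` {..<n})) ` {..<n})"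
  proof (rule arg_cong[where f=Max], rule image_cong[OF refl])
    fix k assume "k \<in> {..<n}"
    then show "Max ((\<lambda>m. mpow n A t i m * A m k) ` {..<n}) * x k = Max ((\<lambda>m. mpow n A t i m * A m k * x k) ` {..<n})"
      using Max_mult_const[of "{..<n}" "x k" "\<lambda>m. mpow n A t i m * A m k"] ne xn by auto
  qed
  also have "\<dots> = Max ((\<lambda>m. Max ((\<lambda>k. mpow n A t i m * A m k * x k) ` {..<n})) ` {..<n})"
    using Max_swap[of "{..<n}" "{..<n}" "\<lambda>k m. mpow n A t i m * A m k * x k"] ne by simp
  also have "\<dots> = Max ((\<lambda>m. mpow n A t i m * Max ((\<lambda>k. A m k * x k) ` {..<n})) ` {..<n})"
  proof (rule arg_cong[where f=Max], rule image_cong[OF refl])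
    fix m assume "m \<in> {..<n}"
    then show "Max ((\<lambda>k. mpow n A t i m * A m k * x k) ` {..<n}) = mpow n A t i m * Max ((\<lambda>k. A m k * x k) ` {..<n})"
      using Max_const_mult[of "{..<n}" "mpow n A t i m" "\<lambda>k. A m k * x k"] ne mpow_nonneg[OF assms(1), of m t]
      by (simp add: mult.assoc)
  qed
  also have "\<dots> = y t (\<lambda>m. mrow_vec n A m x) i" by (simp add: y_def mrow_vec_def)
  finally show ?thesis .
qed


lemma wt_nonneg: "set ds \<subseteq> {..<n} \<Longrightarrow> 0 \<le> wt ds"
  by (induction ds) (auto simp: wt_def c_nonneg)

lemma wt_le: "set ds \<subseteq> {..<n} \<Longrightarrow> wt ds \<le> M ^ length ds"
proof (induction ds)
  case Nil then show ?case by (simp add: wt_def)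
next
  case (Cons d ds)
  then have "wt (d # ds) = c d * wt ds" by (simp add: wt_def)
  also have "\<dots> \<le> M * M ^ length ds"
    using Cons wt_nonneg[of ds] c_le_M[of d] c_nonneg[of d] M_pos by (intro mult_mono) auto
  finally show ?case by simp
qed

lemma wt_append: "wt (xs @ ys) = wt xs * wt ys" by (simp add: wt_def)
lemma wt_Cons: "wt (d # xs) = c d * wt xs" by (simp add: wt_def)

lemma Ax_nonneg: assumes "\<forall>m<n. 0 \<le> x m" "j < n" shows "0 \<le> mrow_vec n A j x"
proof -
  have "0 \<le> A j 0 * x 0" using assms npos nonneg by simp
  also have "\<dots> \<le> mrow_vec n A j x" unfolding mrow_vec_def by (rule Max_ge) (use npos in auto)
  finally show ?thesis .
qed

lemma tg_lt: "tg i ds < n" using npos by (simp add: tg_def)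

lemma tg_snoc: "tg i (ds @ [d]) = (tg i ds + d) mod n"
  by (simp add: tg_def mod_add_left_eq add.assoc)

lemma tg_Cons: "tg i (d # ds) = tg ((i + d) mod n) ds"
  by (simp add: tg_def mod_add_left_eq add.assoc)

lemma W1: "\<forall>m<n. 0 \<le> x m \<Longrightarrow> length ds = t \<Longrightarrow> set ds \<subseteq> {..<n} \<Longrightarrow> i < n \<Longrightarrow>
    wt ds * x (tg i ds) \<le> y t x i"
proof (induction t arbitrary: x ds)
  case 0
  then have "ds = []" by simp
  then have "wt ds * x (tg i ds) = (if i = i then 1 else 0) * x i" using 0 by (simp add: wt_def tg_def)
  also have "\<dots> \<le> y 0 x i" unfolding y_def mrow_vec_def mpow.simps
    by (rule Max_ge) (use 0 in auto)
  finally show ?case .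
next
  case (Suc t)
  obtain ds' d where ds: "ds = ds' @ [d]" using Suc(3) by (cases ds rule: rev_exhaust) auto
  define x' where "x' = (\<lambda>m. mrow_vec n A m x)"
  have x'n: "\<forall>m<n. 0 \<le> x' m" using Ax_nonneg Suc(2) by (simp add: x'_def)
  define j where "j = tg i ds'"
  have j: "j < n" by (simp add: j_def tg_lt)
  have d: "d < n" using Suc(4) ds by auto
  have "c d * x ((j + d) mod n) = A j ((j + d) mod n) * x ((j + d) mod n)" using A_step[OF j d] by simp
  also have "\<dots> \<le> x' j" unfolding x'_def mrow_vec_def by (rule Max_ge) (use npos in auto)
  finally have 1: "c d * x ((j + d) mod n) \<le> x' j" .
  have "wt ds * x (tg i ds) = wt ds' * (c d * x ((j + d) mod n))"
    by (simp add: ds wt_append tg_snoc j_def wt_def)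
  also have "\<dots> \<le> wt ds' * x' j" using 1 wt_nonneg[of ds'] Suc(4) ds by (intro mult_left_mono) auto
  also have "\<dots> \<le> y t x' i" unfolding j_def using Suc ds x'n by (intro Suc.IH) auto
  also have "\<dots> = y (Suc t) x i" using y_Suc[OF Suc(5) Suc(2)] by (simp add: x'_def)
  finally show ?case .
qed

lemma W2: "\<forall>m<n. 0 \<le> x m \<Longrightarrow> i < n \<Longrightarrow>
    \<exists>ds. length ds = t \<and> set ds \<subseteq> {..<n} \<and> y t x i \<le> wt ds * x (tg i ds)"
proof (induction t arbitrary: x)
  case 0
  have "y 0 x i \<le> x i" unfolding y_def mrow_vec_def mpow.simps
    by (rule Max.boundedI) (use 0 npos in auto)
  then show ?case using 0 by (intro exI[of _ "[]"]) (simp add: wt_def tg_def)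
next
  case (Suc t)
  define x' where "x' = (\<lambda>m. mrow_vec n A m x)"
  have x'n: "\<forall>m<n. 0 \<le> x' m" using Ax_nonneg Suc(2) by (simp add: x'_def)
  obtain ds' where ds': "length ds' = t" "set ds' \<subseteq> {..<n}" "y t x' i \<le> wt ds' * x' (tg i ds')"
    using Suc.IH[OF x'n Suc(3)] by blast
  define j where "j = tg i ds'"
  have j: "j < n" by (simp add: j_def tg_lt)
  have "x' j \<in> (\<lambda>k. A j k * x k) ` {..<n}" unfolding x'_def mrow_vec_def
    by (rule Max_in) (use npos in auto)
  then obtain k where k: "k < n" "x' j = A j k * x k" by auto
  define d where "d = (k + n - j) mod n"
  have d: "d < n" using npos by (simp add: d_def)
  have jd: "(j + d) mod n = k" using circ_step2[OF j k(1)] by (simp add: d_def)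
  have Ajk: "A j k = c d" using circI[OF j k(1)] by (simp add: d_def)
  have "y (Suc t) x i = y t x' i" using y_Suc[OF Suc(3) Suc(2)] by (simp add: x'_def)
  also have "\<dots> \<le> wt ds' * x' j" using ds' by (simp add: j_def)
  also have "\<dots> = wt (ds' @ [d]) * x (tg i (ds' @ [d]))"
    using k Ajk jd by (simp add: wt_append tg_snoc j_def[symmetric] wt_def)
  finally show ?case using ds' d by (intro exI[of _ "ds' @ [d]"]) auto
qed

lemma y_nonneg: assumes "\<forall>m<n. 0 \<le> x m" "i < n" shows "0 \<le> y t x i"
proof -
  have r: "set (replicate t 0) \<subseteq> {..<n}" using npos by auto
  have "0 \<le> wt (replicate t 0) * x (tg i (replicate t 0))"
    using wt_nonneg[OF r] assms tg_lt by (intro mult_nonneg_nonneg) auto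
  also have "\<dots> \<le> y t x i" using W1[OF assms(1) _ r assms(2)] by simp
  finally show ?thesis .
qed


lemma nat_mod_eq_via_int:
  fixes a b m :: nat
  assumes "int m dvd (int a - int b)" shows "a mod m = b mod m"
proof -
  have "int a mod int m = int b mod int m" using assms by (simp add: mod_eq_dvd_iff)
  then have "int (a mod m) = int (b mod m)" by (simp add: zmod_int)
  then show ?thesis by simp
qed

lemma Z:
  assumes ds: "set ds \<subseteq> {..<n}" and len: "n \<le> length ds" and s: "s < n" "c s = M"
  shows "\<exists>es. length es = length ds - 1 \<and> set es \<subseteq> {..<n} \<and>
           (sum_list es + s) mod n = sum_list ds mod n \<and> wt ds \<le> M * wt es"
proof -
  define p where "p k = (int (sum_list (take k ds)) - int s * int k) mod int n" for k
  have "\<not> inj_on p {..n}"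
  proof
    assume inj: "inj_on p {..n}"
    have "p ` {..n} \<subseteq> {0..<int n}" using npos by (auto simp: p_def)
    from card_inj_on_le[OF inj this] have "card {..n} \<le> card {0..<int n}" by simp
    then show False by simp
  qed
  then obtain a b where ab: "a \<le> n" "b \<le> n" "a \<noteq> b" "p a = p b" unfolding inj_on_def by auto
  then obtain a b where ab: "a < b" "b \<le> n" "p a = p b"
    by (metis linorder_neq_iff order.strict_trans1)
  define L where "L = b - a"
  define T where "T = take a ds"
  define B where "B = drop a (take b ds)"
  define D where "D = drop b ds"
  have tb: "take b ds = T @ B" unfolding T_def B_def
    by (metis append_take_drop_id min.absorb1 ab(1) less_imp_le take_take)
  have dsd: "ds = T @ B @ D" using tb unfolding D_def by (metis append.assoc append_take_drop_id)
  have lenB: "length B = L" unfolding B_def L_def using ab len by simp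
  have L1: "1 \<le> L" using ab by (simp add: L_def)
  define es where "es = T @ replicate (L - 1) s @ D"
  have "int n dvd ((int (sum_list (take b ds)) - int s * int b) - (int (sum_list (take a ds)) - int s * int a))"
    using ab(3)[symmetric] unfolding p_def by (simp add: mod_eq_dvd_iff)
  moreover have "(int (sum_list (take b ds)) - int s * int b) - (int (sum_list (take a ds)) - int s * int a)
      = int (sum_list B) - int s * int L"
    using tb ab(1) unfolding T_def L_def by (simp add: algebra_simps of_nat_diff)
  ultimately have dv: "int n dvd (int (sum_list B) - int s * int L)" by simp
  have e1: "sum_list es + s = sum_list T + L * s + sum_list D"
  proof -
    have "(L - 1) * s + s = L * s" using L1 by (metis Suc_diff_le diff_Suc_1 mult_Suc add.commute)
    then show ?thesis unfolding es_def by (simp add: sum_list_replicate)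
  qed
  have e2: "sum_list ds = sum_list T + sum_list B + sum_list D" unfolding dsd by simp
  have "int (sum_list ds) - int (sum_list es + s) = int (sum_list B) - int s * int L"
    unfolding e1 e2 by (simp add: algebra_simps)
  with dv have mod: "(sum_list es + s) mod n = sum_list ds mod n"
    by (intro nat_mod_eq_via_int[symmetric]) simp
  have setT: "set T \<subseteq> {..<n}" "set B \<subseteq> {..<n}" "set D \<subseteq> {..<n}" using ds dsd by auto
  have "wt ds = wt T * wt B * wt D" by (simp add: dsd wt_append)
  also have "\<dots> \<le> wt T * M ^ L * wt D"
    using wt_le[OF setT(2)] lenB wt_nonneg setT M_pos by (intro mult_mono mult_left_mono) auto
  also have "\<dots> = M * wt es" using L1 s
    by (simp add: es_def wt_append wt_def power_eq_if)
  finally have w: "wt ds \<le> M * wt es" .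
  have "length es = length ds - 1" using L1 lenB unfolding es_def dsd by simp
  moreover have "set es \<subseteq> {..<n}" using setT s unfolding es_def by auto
  ultimately show ?thesis using mod w by blast
qed


lemma K:
  assumes xn: "\<forall>m<n. 0 \<le> x m" and i: "i < n" and s: "s < n" "c s = M" and t: "n \<le> Suc t"
  shows "y (Suc t) x i = M * y t x ((i + s) mod n)"
proof (rule antisym)
  have is': "(i + s) mod n < n" using npos by simp
  obtain ds where ds: "length ds = Suc t" "set ds \<subseteq> {..<n}" "y (Suc t) x i \<le> wt ds * x (tg i ds)"
    using W2[OF xn i] by blast
  obtain es where es: "length es = length ds - 1" "set es \<subseteq> {..<n}"
     "(sum_list es + s) mod n = sum_list ds mod n" "wt ds \<le> M * wt es"
    using Z[OF ds(2) _ s] ds(1) t by auto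
  have "tg ((i + s) mod n) es = (i + (sum_list es + s)) mod n"
    by (simp add: tg_def mod_add_right_eq add_ac)
  also have "\<dots> = tg i ds" unfolding tg_def using es(3) by (metis mod_add_right_eq)
  finally have tge: "tg ((i + s) mod n) es = tg i ds" .
  have xt: "0 \<le> x (tg i ds)" using xn tg_lt by auto
  have "y (Suc t) x i \<le> wt ds * x (tg i ds)" by fact
  also have "\<dots> \<le> M * wt es * x (tg i ds)" using es(4) xt by (intro mult_right_mono) auto
  also have "\<dots> = M * (wt es * x (tg ((i + s) mod n) es))" using tge by simp
  also have "\<dots> \<le> M * y t x ((i + s) mod n)"
    using W1[OF xn _ es(2) is'] es(1) ds(1) M_pos by (intro mult_left_mono) auto
  finally show "y (Suc t) x i \<le> M * y t x ((i + s) mod n)" .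
  obtain ds where ds: "length ds = t" "set ds \<subseteq> {..<n}" "y t x ((i + s) mod n) \<le> wt ds * x (tg ((i + s) mod n) ds)"
    using W2[OF xn is'] by blast
  have "M * y t x ((i + s) mod n) \<le> M * (wt ds * x (tg ((i + s) mod n) ds))"
    using ds(3) M_pos by (intro mult_left_mono) auto
  also have "\<dots> = wt (s # ds) * x (tg i (s # ds))" using s by (simp add: wt_Cons tg_Cons)
  also have "\<dots> \<le> y (Suc t) x i" using W1[OF xn _ _ i, of "s # ds" "Suc t"] ds s by auto
  finally show "M * y t x ((i + s) mod n) \<le> y (Suc t) x i" .
qed

lemma F:
  assumes xn: "\<forall>m<n. 0 \<le> x m" and i: "i < n"
  shows "y (Suc t) x i = Max ((\<lambda>d. c d * y t x ((i + d) mod n)) ` {..<n})"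
proof (rule antisym)
  obtain ds where ds: "length ds = Suc t" "set ds \<subseteq> {..<n}" "y (Suc t) x i \<le> wt ds * x (tg i ds)"
    using W2[OF xn i] by blast
  then obtain d ds' where dd: "ds = d # ds'" by (cases ds) auto
  have d: "d < n" "set ds' \<subseteq> {..<n}" using ds dd by auto
  have id: "(i + d) mod n < n" using npos by simp
  have "y (Suc t) x i \<le> c d * (wt ds' * x (tg ((i + d) mod n) ds'))"
    using ds(3) by (simp add: dd wt_Cons tg_Cons)
  also have "\<dots> \<le> c d * y t x ((i + d) mod n)"
    using W1[OF xn _ d(2) id] ds dd c_nonneg[OF d(1)] by (intro mult_left_mono) auto
  also have "\<dots> \<le> Max ((\<lambda>d. c d * y t x ((i + d) mod n)) ` {..<n})"
    using d by (intro Max_ge) auto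
  finally show "y (Suc t) x i \<le> Max ((\<lambda>d. c d * y t x ((i + d) mod n)) ` {..<n})" .
  have "Max ((\<lambda>d. c d * y t x ((i + d) mod n)) ` {..<n}) \<in> (\<lambda>d. c d * y t x ((i + d) mod n)) ` {..<n}"
    by (rule Max_in) (use npos in auto)
  then obtain d where d: "d < n" "Max ((\<lambda>d. c d * y t x ((i + d) mod n)) ` {..<n}) = c d * y t x ((i + d) mod n)"
    by auto
  have id: "(i + d) mod n < n" using npos by simp
  obtain ds where ds: "length ds = t" "set ds \<subseteq> {..<n}" "y t x ((i + d) mod n) \<le> wt ds * x (tg ((i + d) mod n) ds)"
    using W2[OF xn id] by blast
  have "c d * y t x ((i + d) mod n) \<le> c d * (wt ds * x (tg ((i + d) mod n) ds))"
    using ds(3) c_nonneg[OF d(1)] by (intro mult_left_mono) auto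
  also have "\<dots> = wt (d # ds) * x (tg i (d # ds))" by (simp add: wt_Cons tg_Cons)
  also have "\<dots> \<le> y (Suc t) x i" using W1[OF xn _ _ i, of "d # ds" "Suc t"] ds d by auto
  finally show "Max ((\<lambda>d. c d * y t x ((i + d) mod n)) ` {..<n}) \<le> y (Suc t) x i" using d by simp
qed

definition attr_at where "attr_at t x \<longleftrightarrow> (\<forall>i<n. y (Suc t) x i = M * y t x i)"
definition Pc where "Pc t x \<longleftrightarrow> (\<forall>i<n. \<forall>s<n. c s = M \<longrightarrow> y t x i = y t x ((i + s) mod n))"

lemma attr_step: assumes xn: "\<forall>m<n. 0 \<le> x m" and a: "attr_at t x" shows "attr_at (Suc t) x"
  unfolding attr_at_def
proof (intro allI impI)
  fix i assume i: "i < n"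
  have "y (Suc (Suc t)) x i = Max ((\<lambda>d. c d * y (Suc t) x ((i + d) mod n)) ` {..<n})" using F[OF xn i] .
  also have "\<dots> = Max ((\<lambda>d. M * (c d * y t x ((i + d) mod n))) ` {..<n})"
  proof (rule arg_cong[where f=Max], rule image_cong[OF refl])
    fix d assume "d \<in> {..<n}"
    have "(i + d) mod n < n" using npos by simp
    then show "c d * y (Suc t) x ((i + d) mod n) = M * (c d * y t x ((i + d) mod n))"
      using a unfolding attr_at_def by simp
  qed
  also have "\<dots> = M * Max ((\<lambda>d. c d * y t x ((i + d) mod n)) ` {..<n})"
    using Max_const_mult[of "{..<n}" M "\<lambda>d. c d * y t x ((i + d) mod n)"] npos M_pos
    by (simp add: lessThan_empty_iff)
  also have "\<dots> = M * y (Suc t) x i" using F[OF xn i] by simp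
  finally show "y (Suc (Suc t)) x i = M * y (Suc t) x i" .
qed

lemma attr_add: "\<forall>m<n. 0 \<le> x m \<Longrightarrow> attr_at t x \<Longrightarrow> attr_at (t + k) x"
  by (induction k) (auto intro: attr_step)

lemma attr_iff_Pc: assumes xn: "\<forall>m<n. 0 \<le> x m" and t: "n \<le> Suc t"
  shows "attr_at t x \<longleftrightarrow> Pc t x"
proof
  assume a: "attr_at t x"
  show "Pc t x" unfolding Pc_def
  proof (intro allI impI)
    fix i s assume i: "i < n" and s: "s < n" "c s = M"
    have "y (Suc t) x i = M * y t x i" using a i unfolding attr_at_def by blast
    then have "M * y t x i = M * y t x ((i + s) mod n)"
      using K[OF xn i s t] by linarith
    then show "y t x i = y t x ((i + s) mod n)" using M_pos by simp
  qed
next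
  assume p: "Pc t x"
  obtain s0 where s0: "s0 < n" "c s0 = M" using M_attained by blast
  show "attr_at t x" unfolding attr_at_def
  proof (intro allI impI)
    fix i assume i: "i < n"
    have "y t x i = y t x ((i + s0) mod n)" using p i s0 unfolding Pc_def by blast
    then show "y (Suc t) x i = M * y t x i" using K[OF xn i s0 t] by simp
  qed
qed

lemma Pc_down: assumes xn: "\<forall>m<n. 0 \<le> x m" and u: "n \<le> Suc u" and p: "Pc (Suc u) x"
  shows "Pc u x"
  unfolding Pc_def
proof (intro allI impI)
  fix j s assume j: "j < n" and s: "s < n" "c s = M"
  obtain s0 where s0: "s0 < n" "c s0 = M" using M_attained by blast
  define i where "i = (j + n - s0) mod n"
  have i: "i < n" using npos by (simp add: i_def)
  have ij: "(i + s0) mod n = j"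
  proof -
    have "(i + s0) mod n = (j + n - s0 + s0) mod n" unfolding i_def by (simp add: mod_add_left_eq)
    also have "\<dots> = j" using s0 j by simp
    finally show ?thesis .
  qed
  define i' where "i' = (i + s) mod n"
  have i': "i' < n" using npos by (simp add: i'_def)
  have ij': "(i' + s0) mod n = (j + s) mod n"
  proof -
    have "(i' + s0) mod n = (i + s0 + s) mod n" unfolding i'_def by (simp add: mod_add_right_eq add_ac)
    also have "\<dots> = (j + s) mod n" using ij by (metis mod_add_left_eq)
    finally show ?thesis .
  qed
  have "M * y u x j = y (Suc u) x i" using K[OF xn i s0 u] ij by simp
  also have "\<dots> = y (Suc u) x i'" using p i s unfolding Pc_def i'_def by blast
  also have "\<dots> = M * y u x ((j + s) mod n)" using K[OF xn i' s0 u] ij' by simp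
  finally show "y u x j = y u x ((j + s) mod n)" using M_pos by simp
qed

lemma Pc_down_add: "\<forall>m<n. 0 \<le> x m \<Longrightarrow> n \<le> Suc u \<Longrightarrow> Pc (u + k) x \<Longrightarrow> Pc u x"
proof (induction k)
  case 0 then show ?case by simp
next
  case (Suc k)
  then show ?case using Pc_down[of x "u + k"] by simp
qed

lemma attr_N: assumes xn: "\<forall>m<n. 0 \<le> x m" and N: "n \<le> Suc N"
  shows "(\<exists>t. attr_at t x) \<longleftrightarrow> Pc N x"
proof
  assume "\<exists>t. attr_at t x"
  then obtain t where "attr_at t x" by blast
  then have "attr_at (N + t) x" using attr_add[OF xn, of t N] by (simp add: add.commute)
  then have "Pc (N + t) x" using attr_iff_Pc[OF xn] N by simp
  then show "Pc N x" using Pc_down_add[OF xn N] by blast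
next
  assume "Pc N x" then show "\<exists>t. attr_at t x" using attr_iff_Pc[OF xn N] by blast
qed


definition L where "L s = n div gcd n s"
definition orb where "orb j s = map (\<lambda>k. (j + k * s) mod n) [0..<L s]"

lemma L_pos: "0 < L s"
proof -
  have g: "0 < gcd n s" using npos by simp
  have "gcd n s \<le> n" using npos by (simp add: gcd_le1_nat)
  then show ?thesis unfolding L_def using g npos by (simp add: div_greater_zero_iff)
qed

lemma L_dvd: "n dvd L s * s"
proof -
  have "L s * s = n * (s div gcd n s)" unfolding L_def
    by (metis dvd_div_mult gcd_dvd1 gcd_dvd2 mult.commute div_mult_swap)
  then show ?thesis by simp
qed

lemma L_inj: assumes k: "k < L s" "k' < L s" and eq: "(j + k * s) mod n = (j + k' * s) mod n"
  shows "k = k'"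
proof -
  have main: "k = k'" if kk: "k' \<le> k" "k < L s" and e: "(j + k * s) mod n = (j + k' * s) mod n" for k k'
  proof -
    have "n dvd (j + k * s) - (j + k' * s)"
      using e kk by (subst mod_eq_dvd_iff_nat[symmetric]) (auto intro: mult_le_mono)
    then have d1: "n dvd (k - k') * s" by (simp add: diff_mult_distrib)
    define g where "g = gcd n s"
    have g: "0 < g" using npos by (simp add: g_def)
    have "n = g * (n div g)" "s = g * (s div g)" by (simp_all add: g_def)
    then have "g * (n div g) dvd g * ((k - k') * (s div g))" using d1
      by (metis mult.left_commute)
    then have "n div g dvd (k - k') * (s div g)" using g by simp
    moreover have "coprime (n div g) (s div g)" unfolding g_def using div_gcd_coprime npos by blast
    ultimately have "n div g dvd k - k'" using coprime_dvd_mult_left_iff by blast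
    moreover have "k - k' < n div g" using kk unfolding L_def g_def by simp
    ultimately show ?thesis using kk by (metis diff_is_0_eq dvd_imp_le le_antisym not_gr0 not_le)
  qed
  show ?thesis
  proof (cases "k' \<le> k")
    case True then show ?thesis using main k eq by blast
  next
    case False then show ?thesis using main[of k k'] k eq by simp
  qed
qed

lemma orb_len: "length (orb j s) = L s" by (simp add: orb_def)
lemma orb_nth: "l < L s \<Longrightarrow> orb j s ! l = (j + l * s) mod n" by (simp add: orb_def)
lemma orb_distinct: "distinct (orb j s)"
  unfolding distinct_conv_nth orb_len using L_inj by (auto simp: orb_nth)
lemma orb_set: "set (orb j s) \<subseteq> {..<n}" using npos by (auto simp: orb_def)
lemma orb_0: "j < n \<Longrightarrow> orb j s ! 0 = j" using L_pos by (simp add: orb_nth)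

lemma orb_next: assumes j: "j < n" and l: "l < L s"
  shows "orb j s ! (Suc l mod L s) = (orb j s ! l + s) mod n"
proof (cases "Suc l < L s")
  case True
  then show ?thesis using l by (simp add: orb_nth mod_add_right_eq add_ac)
next
  case False
  then have sl: "Suc l = L s" using l by simp
  have "(orb j s ! l + s) mod n = (j + l * s + s) mod n" using l by (simp add: orb_nth mod_add_left_eq)
  also have "\<dots> = (j + L s * s) mod n" unfolding sl[symmetric] by (simp add: add_ac)
  also have "\<dots> = j"
  proof -
    obtain k where "L s * s = n * k" using L_dvd[of s] by (elim dvdE)
    then show ?thesis using j by simp
  qed
  finally show ?thesis using sl orb_0[OF j] by simp
qed

lemma A_le_M: "u < n \<Longrightarrow> v < n \<Longrightarrow> A u v \<le> M"
  using circI[of u v] c_le_M[of "(v + n - u) mod n"] npos by simp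

lemma A_ge0: "u < n \<Longrightarrow> v < n \<Longrightarrow> 0 \<le> A u v"
  using nonneg by simp

lemma cycle_mean_le: assumes "is_cycle n A vs" shows "cycle_mean A vs \<le> M"
proof -
  let ?L = "length vs"
  have Lp: "0 < ?L" using assms by (simp add: is_cycle_def)
  have inn: "vs ! l < n" if "l < ?L" for l
  proof -
    have "vs ! l \<in> set vs" using that by (rule nth_mem)
    then show ?thesis using assms by (auto simp: is_cycle_def)
  qed
  have "cycle_weight A vs \<le> (\<Prod>l<?L. M)" unfolding cycle_weight_def
    using inn Lp by (intro prod_mono) (auto intro!: A_ge0 A_le_M)
  then have "cycle_weight A vs \<le> M ^ ?L" by simp
  then have "cycle_mean A vs \<le> root ?L (M ^ ?L)" unfolding cycle_mean_def by (rule real_root_le_mono[OF Lp])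
  also have "\<dots> = M" using Lp M_pos by (simp add: real_root_power_cancel)
  finally show ?thesis .
qed

lemma orb_cycle: assumes j: "j < n" and s: "s < n" "c s = M"
  shows "is_cycle n A (orb j s)" "cycle_mean A (orb j s) = M"
proof -
  have e: "A (orb j s ! l) (orb j s ! (Suc l mod L s)) = M" if "l < L s" for l
  proof -
    have "orb j s ! l < n" using that orb_set nth_mem orb_len by (metis lessThan_iff subsetD)
    then show ?thesis using orb_next[OF j that] A_step s by simp
  qed
  have ne: "orb j s \<noteq> []" using L_pos[of s] orb_len[of j s] by auto
  show "is_cycle n A (orb j s)" unfolding is_cycle_def
    using ne orb_distinct orb_set L_pos e M_pos by (auto simp: orb_len)
  have "cycle_weight A (orb j s) = M ^ L s" unfolding cycle_weight_def orb_len using e by simp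
  then show "cycle_mean A (orb j s) = M" unfolding cycle_mean_def orb_len
    using L_pos M_pos by (simp add: real_root_power_cancel)
qed

lemma mlambda_eq: "mlambda n A = M"
proof -
  obtain s0 where s0: "s0 < n" "c s0 = M" using M_attained by blast
  have ex: "\<exists>vs. is_cycle n A vs" using orb_cycle[OF npos s0] by blast
  have fin: "finite {vs. is_cycle n A vs}"
  proof (rule finite_subset)
    show "{vs. is_cycle n A vs} \<subseteq> {vs. set vs \<subseteq> {..<n} \<and> length vs \<le> n}"
    proof safe
      fix vs assume "is_cycle n A vs"
      then have "set vs \<subseteq> {..<n}" "distinct vs" by (auto simp: is_cycle_def)
      then show "length vs \<le> n" by (metis card_lessThan card_mono distinct_card finite_lessThan)
    qed (auto simp: is_cycle_def)
    show "finite {vs. set vs \<subseteq> {..<n} \<and> length vs \<le> n}" by (rule finite_lists_length_le) simp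
  qed
  have "Max (cycle_mean A ` {vs. is_cycle n A vs}) = M"
  proof (rule Max_eqI)
    show "finite (cycle_mean A ` {vs. is_cycle n A vs})" using fin by simp
    show "y' \<le> M" if "y' \<in> cycle_mean A ` {vs. is_cycle n A vs}" for y' using that cycle_mean_le by auto
    have "cycle_mean A (orb 0 s0) \<in> cycle_mean A ` {vs. is_cycle n A vs}"
      using orb_cycle(1)[OF npos s0] by (intro imageI) simp
    then show "M \<in> cycle_mean A ` {vs. is_cycle n A vs}" using orb_cycle(2)[OF npos s0] by simp
  qed
  then show ?thesis using ex by (simp add: mlambda_def)
qed


abbreviation E where "E \<equiv> crit_edges n A"

lemma crit_edge_char:
  assumes "(u, v) \<in> E"
  shows "u < n \<and> v < n \<and> A u v = M \<and> (\<exists>s<n. c s = M \<and> v = (u + s) mod n)"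
proof -
  obtain vs l where vl: "crit_cycle n A vs" "l < length vs" "u = vs ! l" "v = vs ! (Suc l mod length vs)"
    using assms unfolding crit_edges_def by blast
  let ?L = "length vs"
  have cyc: "is_cycle n A vs" and mean: "cycle_mean A vs = M"
    using vl(1) mlambda_eq by (auto simp: crit_cycle_def)
  have Lp: "0 < ?L" using cyc by (simp add: is_cycle_def)
  have inn: "vs ! k < n" if "k < ?L" for k
  proof -
    have "vs ! k \<in> set vs" using that by (rule nth_mem)
    then show ?thesis using cyc by (auto simp: is_cycle_def)
  qed
  have un: "u < n" using inn vl by simp
  have vn: "v < n" using inn vl Lp by simp
  define f where "f k = A (vs ! k) (vs ! (Suc k mod ?L))" for k
  have f0: "0 \<le> f k" "f k \<le> M" if "k < ?L" for k
    using that inn Lp unfolding f_def by (auto intro!: A_ge0 A_le_M)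
  have AM: "A u v = M"
  proof (rule ccontr)
    assume "A u v \<noteq> M"
    then have lt: "f l < M" using f0[OF vl(2)] vl unfolding f_def by simp
    have "cycle_weight A vs = f l * (\<Prod>k\<in>{..<?L} - {l}. f k)"
      unfolding cycle_weight_def f_def[symmetric] using vl(2) by (simp add: prod.remove)
    also have "\<dots> \<le> f l * (\<Prod>k\<in>{..<?L} - {l}. M)"
      using f0 vl(2) by (intro mult_left_mono prod_mono) auto
    also have "\<dots> = f l * M ^ (?L - 1)" using vl(2) by simp
    also have "\<dots> < M * M ^ (?L - 1)" using lt M_pos by (intro mult_strict_right_mono) auto
    also have "\<dots> = M ^ ?L" using Lp by (metis Suc_diff_1 power_Suc)
    finally have "cycle_mean A vs < root ?L (M ^ ?L)" unfolding cycle_mean_def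
      by (rule real_root_less_mono[OF Lp])
    also have "\<dots> = M" using Lp M_pos by (simp add: real_root_power_cancel)
    finally show False using mean by simp
  qed
  define s where "s = (v + n - u) mod n"
  have "s < n" "c s = M" "v = (u + s) mod n"
    using npos AM circI[OF un vn] circ_step2[OF un vn] by (auto simp: s_def)
  then show ?thesis using un vn AM by blast
qed

lemma crit_edge_nodes: assumes "(u, v) \<in> E" shows "crit_node n A u \<and> crit_node n A v"
proof -
  obtain vs l where vl: "crit_cycle n A vs" "l < length vs" "u = vs ! l" "v = vs ! (Suc l mod length vs)"
    using assms unfolding crit_edges_def by blast
  have "u \<in> set vs" using vl by simp
  moreover have "Suc l mod length vs < length vs" using vl(2) by (intro mod_less_divisor) (cases vs, auto)
  then have "v \<in> set vs" using vl(4) by (metis nth_mem)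
  ultimately show ?thesis using vl(1) unfolding crit_node_def by blast
qed

lemma crit_step_edge: assumes j: "j < n" and s: "s < n" "c s = M"
  shows "(j, (j + s) mod n) \<in> E"
proof -
  have cc: "crit_cycle n A (orb j s)" using orb_cycle[OF j s] mlambda_eq by (simp add: crit_cycle_def)
  have lp: "0 < length (orb j s)" using L_pos[of s] by (simp add: orb_len)
  have "(orb j s ! 0, orb j s ! (Suc 0 mod length (orb j s))) \<in> E"
    unfolding crit_edges_def using cc lp by blast
  then show ?thesis using orb_next[OF j L_pos[of s]] orb_0[OF j] by (simp add: orb_len)
qed

lemma crit_orbit_pow: assumes j: "j < n" and s: "s < n" "c s = M"
  shows "(j, (j + k * s) mod n) \<in> E ^^ k"
proof (induction k)
  case 0 then show ?case using j by simp
next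
  case (Suc k)
  have jk: "(j + k * s) mod n < n" using npos by simp
  have "((j + k * s) mod n, ((j + k * s) mod n + s) mod n) \<in> E"
    by (rule crit_step_edge[OF jk s])
  moreover have "((j + k * s) mod n + s) mod n = (j + Suc k * s) mod n"
  proof -
    have "((j + k * s) mod n + s) mod n = (j + k * s + s) mod n" by (rule mod_add_left_eq)
    moreover have "j + k * s + s = j + Suc k * s" by simp
    ultimately show ?thesis by simp
  qed
  ultimately show ?case using relpow_Suc_I[OF Suc.IH] by simp
qed

definition cw where "cw i vs \<longleftrightarrow> vs \<noteq> [] \<and>
  (\<forall>k<length vs. (vs ! k, vs ! (Suc k mod length vs)) \<in> E) \<and> (\<forall>v\<in>set vs. crit_sim n A v i)"

lemma cw_dvd: "cw i vs \<Longrightarrow> cyclicity n A i dvd length vs"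
proof (induction "length vs" arbitrary: vs rule: less_induct)
  case less
  note cwv = less.prems[unfolded cw_def]
  let ?l = "length vs"
  show ?case
  proof (cases "distinct vs")
    case True
    have inn: "v < n" if vin: "v \<in> set vs" for v
    proof -
      obtain k where k: "k < ?l" "v = vs ! k" using vin unfolding in_set_conv_nth by blast
      have "(vs ! k, vs ! (Suc k mod ?l)) \<in> E" using cwv k(1) by simp
      from crit_edge_char[OF this] show ?thesis using k by simp
    qed
    have nz: "A (vs ! l) (vs ! (Suc l mod ?l)) \<noteq> 0" if "l < ?l" for l
    proof -
      have "(vs ! l, vs ! (Suc l mod ?l)) \<in> E" using cwv that by blast
      then have "A (vs ! l) (vs ! (Suc l mod ?l)) = M" using crit_edge_char by simp
      then show ?thesis using M_pos by simp
    qed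
    have "is_cycle n A vs" unfolding is_cycle_def
      using cwv True inn nz by blast
    moreover have "crit_sim n A (hd vs) i" using cwv by simp
    ultimately have "?l \<in> {length vs | vs. is_cycle n A vs \<and>
      (\<forall>l<length vs. (vs ! l, vs ! (Suc l mod length vs)) \<in> crit_edges n A) \<and>
      crit_sim n A (hd vs) i}" using cwv by blast
    then show ?thesis unfolding cyclicity_def by (rule Gcd_dvd)
  next
    case False
    then obtain p q where pq: "p < q" "q < ?l" "vs ! p = vs ! q"
      unfolding distinct_conv_nth by (metis linorder_neq_iff)
    define m1 where "m1 = q - p"
    define m2 where "m2 = ?l - (q - p)"
    define ws1 where "ws1 = map (\<lambda>k. vs ! (p + k)) [0..<m1]"
    define f where "f k = (if k < p then k else k + (q - p))" for k
    define ws2 where "ws2 = map (\<lambda>k. vs ! f k) [0..<m2]"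
    have len1: "length ws1 = m1" and len2: "length ws2 = m2" by (simp_all add: ws1_def ws2_def)
    have m1: "0 < m1" "m1 < ?l" using pq by (auto simp: m1_def)
    have m2: "0 < m2" "m2 < ?l" using pq by (auto simp: m2_def)
    have edge: "(vs ! k, vs ! (Suc k mod ?l)) \<in> E" if "k < ?l" for k using cwv that by blast
    have sub1: "set ws1 \<subseteq> set vs" using pq by (auto simp: ws1_def m1_def)
    have fl: "f k < ?l" if "k < m2" for k using that pq by (auto simp: f_def m2_def)
    have sub2: "set ws2 \<subseteq> set vs" using fl by (auto simp: ws2_def)
    have cw1: "cw i ws1" unfolding cw_def
    proof (intro conjI allI impI ballI)
      show "ws1 \<noteq> []" using len1 m1 by auto
      show "crit_sim n A v i" if "v \<in> set ws1" for v using that sub1 cwv by blast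
      fix k assume k: "k < length ws1"
      then have k': "k < m1" using len1 by simp
      have pk: "p + k < ?l" using k' pq by (simp add: m1_def)
      have e: "(vs ! (p + k), vs ! (Suc (p + k) mod ?l)) \<in> E" using edge[OF pk] .
      have "Suc (p + k) < ?l" using k' pq by (simp add: m1_def)
      then have e': "(vs ! (p + k), vs ! (Suc (p + k))) \<in> E" using e by simp
      show "(ws1 ! k, ws1 ! (Suc k mod length ws1)) \<in> E"
      proof (cases "Suc k < m1")
        case True then show ?thesis using e' k' len1 by (simp add: ws1_def)
      next
        case False
        then have "Suc k = m1" using k' by simp
        then have "Suc (p + k) = q" using pq by (simp add: m1_def)
        then show ?thesis using e' k' len1 pq m1 \<open>Suc k = m1\<close> by (simp add: ws1_def)
      qed
    qed
    have cw2: "cw i ws2" unfolding cw_def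
    proof (intro conjI allI impI ballI)
      show "ws2 \<noteq> []" using len2 m2 by auto
      show "crit_sim n A v i" if "v \<in> set ws2" for v using that sub2 cwv by blast
      fix k assume k: "k < length ws2"
      then have k': "k < m2" using len2 by simp
      have e: "(vs ! f k, vs ! (Suc (f k) mod ?l)) \<in> E" using edge[OF fl[OF k']] .
      have key: "vs ! (Suc (f k) mod ?l) = vs ! f (Suc k mod m2)"
      proof (cases "Suc k < m2")
        case True
        then have sm: "Suc k mod m2 = Suc k" by (rule mod_less)
        show ?thesis
        proof (cases "Suc k < p")
          case True
          then have "f k = k" "f (Suc k) = Suc k" by (simp_all add: f_def)
          moreover have "Suc k < ?l" using True pq by linarith
          ultimately show ?thesis using sm by simp
        next
          case False
          show ?thesis
          proof (cases "Suc k = p")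
            case True
            then have "f k = k" "f (Suc k) = q" using pq by (simp_all add: f_def)
            moreover have "Suc k < ?l" using True pq by linarith
            ultimately show ?thesis using sm True pq(3) by simp
          next
            case False
            then have pk: "p \<le> k" using \<open>\<not> Suc k < p\<close> by simp
            then have "f k = k + (q - p)" "f (Suc k) = Suc (k + (q - p))" by (simp_all add: f_def)
            moreover have "Suc (k + (q - p)) < ?l" using \<open>Suc k < m2\<close> pq unfolding m2_def by linarith
            ultimately show ?thesis using sm by simp
          qed
        qed
      next
        case False
        then have sk: "Suc k = m2" using k' by simp
        then have sm: "Suc k mod m2 = 0" by simp
        have pk: "p \<le> k"
        proof (rule ccontr)
          assume "\<not> p \<le> k"
          then have "m2 \<le> p" using sk by simp
          then show False using pq unfolding m2_def by linarith
        qed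
        then have "f k = k + (q - p)" by (simp add: f_def)
        then have "Suc (f k) = ?l" using sk pq unfolding m2_def by linarith
        then have l0: "Suc (f k) mod ?l = 0" by simp
        show ?thesis
        proof (cases "p = 0")
          case True
          then have "f 0 = q" by (simp add: f_def)
          then show ?thesis using l0 sm pq(3) True by simp
        next
          case False
          then have "f 0 = 0" by (simp add: f_def)
          then show ?thesis using l0 sm by simp
        qed
      qed
      have n1: "ws2 ! k = vs ! f k" using k' by (simp add: ws2_def)
      have "Suc k mod m2 < m2" using m2(1) by (rule mod_less_divisor)
      then have n2: "ws2 ! (Suc k mod length ws2) = vs ! f (Suc k mod m2)" by (simp add: ws2_def)
      show "(ws2 ! k, ws2 ! (Suc k mod length ws2)) \<in> E"
        using e unfolding n1 n2 key .
    qed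
    have "cyclicity n A i dvd m1" using less.hyps[OF _ cw1] len1 m1 by simp
    moreover have "cyclicity n A i dvd m2" using less.hyps[OF _ cw2] len2 m2 by simp
    ultimately have "cyclicity n A i dvd m1 + m2" by simp
    moreover have "m1 + m2 = ?l" using pq by (simp add: m1_def m2_def)
    ultimately show ?thesis by simp
  qed
qed


lemma closed_dvd: assumes "(i, i) \<in> E ^^ l" "0 < l" shows "cyclicity n A i dvd l"
proof -
  obtain f where f: "f 0 = i" "f l = i" "\<forall>k<l. (f k, f (Suc k)) \<in> E"
    using assms(1) unfolding relpow_fun_conv by blast
  have path: "(f a, f b) \<in> E\<^sup>*" if "a \<le> b" "b \<le> l" for a b
    using that
  proof (induction b)
    case 0 then show ?case by simp
  next
    case (Suc b)
    show ?case
    proof (cases "a = Suc b")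
      case True then show ?thesis by simp
    next
      case False
      then have "(f a, f b) \<in> E\<^sup>*" using Suc by simp
      moreover have "(f b, f (Suc b)) \<in> E" using f(3) Suc.prems by simp
      ultimately show ?thesis by (rule rtrancl_into_rtrancl)
    qed
  qed
  define vs where "vs = map f [0..<l]"
  have len: "length vs = l" by (simp add: vs_def)
  have nth: "vs ! k = f k" if "k < l" for k using that by (simp add: vs_def)
  have "cw i vs" unfolding cw_def
  proof (intro conjI allI impI ballI)
    show "vs \<noteq> []" using len assms(2) by auto
    fix k assume k: "k < length vs"
    then have k': "k < l" using len by simp
    have "Suc k mod l < l" using assms(2) by (rule mod_less_divisor)
    then have "vs ! (Suc k mod length vs) = f (Suc k mod l)" using nth len by simp
    also have "\<dots> = f (Suc k)"
    proof (cases "Suc k < l")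
      case True then show ?thesis by simp
    next
      case False
      then have "Suc k = l" using k' by simp
      then show ?thesis using f by simp
    qed
    finally show "(vs ! k, vs ! (Suc k mod length vs)) \<in> E" using f(3) k' nth by simp
  next
    fix v assume "v \<in> set vs"
    then obtain k where k: "k < l" "v = f k" by (auto simp: vs_def)
    have "crit_node n A (f k)" using crit_edge_nodes f(3) k(1) by blast
    moreover have "crit_node n A i" using crit_edge_nodes f(3) assms(2) f(1) by fastforce
    moreover have "(f k, i) \<in> E\<^sup>*" using path[of k l] k f(2) by simp
    moreover have "(i, f k) \<in> E\<^sup>*" using path[of 0 k] k f(1) by simp
    ultimately show "crit_sim n A v i" unfolding crit_sim_def using k by simp
  qed
  from cw_dvd[OF this] show ?thesis using len by simp
qed

lemma cyc_next_step: assumes i: "i < n" and s: "s < n" "c s = M"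
  shows "cyc_next n A i ((i + s) mod n)"
proof -
  define j where "j = (i + s) mod n"
  have jn: "j < n" using npos by (simp add: j_def)
  have e: "(i, j) \<in> E" using crit_step_edge[OF i s] by (simp add: j_def)
  have sn: "s + (n - 1) * s = n * s" using npos by (metis Suc_diff_1 mult_Suc)
  have "((i + s) mod n + (n - 1) * s) mod n = (i + s + (n - 1) * s) mod n" by (rule mod_add_left_eq)
  also have "\<dots> = (i + n * s) mod n" using sn by (simp add: add.assoc)
  finally have ji: "(j + (n - 1) * s) mod n = i" using i by (simp add: j_def)
  have bk: "(j, i) \<in> E ^^ (n - 1)" using crit_orbit_pow[OF jn s, of "n - 1"] ji by simp
  have fl0: "(i, i) \<in> E ^^ n" using crit_orbit_pow[OF i s, of n] i by simp
  have sim: "crit_sim n A i j" unfolding crit_sim_def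
    using crit_edge_nodes[OF e] r_into_rtrancl[OF e] relpow_imp_rtrancl[OF bk] by blast
  have dn: "cyclicity n A i dvd n" using closed_dvd[OF fl0 npos] .
  have "l mod cyclicity n A i = 1 mod cyclicity n A i" if l: "(i, j) \<in> E ^^ l" for l
  proof -
    have cl: "(i, i) \<in> E ^^ (l + (n - 1))" unfolding relpow_add by (rule relcompI[OF l bk])
    show ?thesis
    proof (cases "0 < l + (n - 1)")
      case True
      have d2: "cyclicity n A i dvd l + (n - 1)" using closed_dvd[OF cl True] .
      have i1: "int (cyclicity n A i) dvd int (l + (n - 1))" using d2 by (simp only: int_dvd_int_iff)
      have i2: "int (cyclicity n A i) dvd int n" using dn by (simp only: int_dvd_int_iff)
      have "int (cyclicity n A i) dvd int (l + (n - 1)) - int n" using i1 i2 by (rule dvd_diff)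
      moreover have "int (l + (n - 1)) - int n = int l - int 1" using npos by simp
      ultimately show ?thesis by (intro nat_mod_eq_via_int) simp
    next
      case False
      then have "n = 1" using npos by simp
      then have "cyclicity n A i = 1" using dn by simp
      then show ?thesis by simp
    qed
  qed
  then show ?thesis unfolding cyc_next_def j_def[symmetric] using sim by blast
qed

lemma main:
  assumes xn: "\<forall>m<n. 0 \<le> x m"
  shows "((\<exists>t. attr_at t x) \<longleftrightarrow> (\<forall>i<n. \<forall>j<n. cyc_next n A i j \<longrightarrow> y (n^2) x i = y (n^2) x j))
       \<and> ((\<exists>t. attr_at t x) \<longleftrightarrow> (\<forall>i<n. \<forall>j<n. crit_sim n A i j \<longrightarrow> y (n^2) x i = y (n^2) x j))"
proof -
  define N where "N = n^2"
  have N: "n \<le> Suc N" unfolding N_def using npos by (simp add: power2_eq_square le_SucI le_square)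
  have P2: "y N x i = y N x j" if p: "Pc N x" and cs: "crit_sim n A i j" for i j
  proof -
    have "(i, j) \<in> E\<^sup>*" using cs by (simp add: crit_sim_def)
    then show ?thesis
    proof (induction rule: rtrancl_induct)
      case base then show ?case by simp
    next
      case (step b d)
      from crit_edge_char[OF step.hyps(2)] obtain s where
        "b < n" "s < n" "c s = M" "d = (b + s) mod n" by blast
      then have "y N x b = y N x d" using p unfolding Pc_def by blast
      then show ?case using step.IH by simp
    qed
  qed
  have C1P: "Pc N x" if c1: "\<forall>i<n. \<forall>j<n. cyc_next n A i j \<longrightarrow> y N x i = y N x j"
    unfolding Pc_def
  proof (intro allI impI)
    fix i s assume i: "i < n" and s: "s < n" "c s = M"
    have "(i + s) mod n < n" using npos by simp
    then show "y N x i = y N x ((i + s) mod n)" using c1 i cyc_next_step[OF i s] by blast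
  qed
  define C1 where "C1 = (\<forall>i<n. \<forall>j<n. cyc_next n A i j \<longrightarrow> y N x i = y N x j)"
  define C2 where "C2 = (\<forall>i<n. \<forall>j<n. crit_sim n A i j \<longrightarrow> y N x i = y N x j)"
  have a1: "(\<exists>t. attr_at t x) \<longleftrightarrow> Pc N x" using attr_N[OF xn N] .
  have a2: "Pc N x \<Longrightarrow> C2" unfolding C2_def using P2 by blast
  have a3: "C2 \<Longrightarrow> C1" unfolding C1_def C2_def cyc_next_def by blast
  have a4: "C1 \<Longrightarrow> Pc N x" unfolding C1_def using C1P by blast
  have "((\<exists>t. attr_at t x) \<longleftrightarrow> C1) \<and> ((\<exists>t. attr_at t x) \<longleftrightarrow> C2)"
    using a1 a2 a3 a4 by blast
  then show ?thesis unfolding C1_def C2_def N_def .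
qed

end

theorem proposition5:
  fixes n :: nat and A :: "nat \<Rightarrow> nat \<Rightarrow> real" and x :: "nat \<Rightarrow> real"
  assumes circ: "circulant n A"
    and nonneg: "\<forall>i<n. \<forall>j<n. 0 \<le> A i j"
    and nonzero: "\<exists>i<n. \<exists>j<n. A i j \<noteq> 0"
    and xnonneg: "\<forall>i<n. 0 \<le> x i"
  shows "(x \<in> Attr n A \<longleftrightarrow>
           (\<forall>i<n. \<forall>j<n. cyc_next n A i j \<longrightarrow>
              mrow_vec n (mpow n A (n^2)) i x = mrow_vec n (mpow n A (n^2)) j x))
       \<and> (x \<in> Attr n A \<longleftrightarrow>
           (\<forall>i<n. \<forall>j<n. crit_sim n A i j \<longrightarrow>
              mrow_vec n (mpow n A (n^2)) i x = mrow_vec n (mpow n A (n^2)) j x))"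
proof -
  have npos: "0 < n" using nonzero by auto
  obtain a where a: "\<forall>i<n. \<forall>j<n. A i j = a ((j + n - i) mod n)" using circ unfolding circulant_def by blast
  have c: "\<forall>i<n. \<forall>j<n. A i j = A 0 ((j + n - i) mod n)"
  proof (intro allI impI)
    fix i j assume ij: "i < n" "j < n"
    have d: "(j + n - i) mod n < n" using npos by simp
    have "A 0 ((j + n - i) mod n) = a (((j + n - i) mod n + n - 0) mod n)" using a npos d by blast
    also have "\<dots> = a ((j + n - i) mod n)" by simp
    finally show "A i j = A 0 ((j + n - i) mod n)" using a[rule_format, OF ij] by simp
  qed
  interpret cm n A using npos c nonneg nonzero by unfold_locales
  have attr: "x \<in> Attr n A \<longleftrightarrow> (\<exists>t. attr_at t x)"
    unfolding Attr_def attr_at_def y_def mlambda_eq using xnonneg by simp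
  show ?thesis using main[OF xnonneg] unfolding attr y_def .
qed

end
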